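(* Let $rr(n)$ be the number of partitions of $n$ into parts congruent to $\pm1\pmod5$, i.e. $\sum_{n\ge0}rr(n)q^n=\prod_{i\ge0}\frac{1}{(1-q^{5i+1})(1-q^{5i+4})}$. Let $a_i$ be the coefficients of $\sum_{j\in\mathbb Z}(-1)^jq^{j(5j-1)/2}=\sum_{i\ge0}a_iq^i$; explicitly $a_i=1$ if $i=10j^2\pm j$ for some integer $j\ge0$, $a_i=-1$ if $i=10j^2\pm9j+2$ for some integer $j\ge0$, and $a_i=0$ otherwise. Then for every $n\ge0$, $$rr(n)=\sum_{i=0}^n a_i\sum_{\substack{c\in\mathcal C_{P_5}\\ |c|=n-i}}(-1)^{\widehat\ell(c)},$$ where $P_5=\{m(3m\pm1)/2: m\in\mathbb N\}$.
   Context: A composition is an ordered finite sequence of positive integers (including the empty one); $|c|$ is the sum of parts; $\mathcal C_T$ is the set of compositions with all parts in $T$. $\widehat P:=\{m(3m\pm1)/2: m\in\mathbb N,\ m\text{ even}\}$, and $\widehat\ell(c)$ is the number of parts of $c$ lying in $\widehat P$. *)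

theory Defs
  imports Main "HOL-Library.Multiset"
begin

definition rr :: "nat \<Rightarrow> nat" where
  "rr n = card {M :: nat multiset. (\<forall>x\<in>#M. 0 < x \<and> (x mod 5 = 1 \<or> x mod 5 = 4)) \<and> sum_mset M = n}"

definition acoef :: "nat \<Rightarrow> int" where
  "acoef i = (if \<exists>j::int. j \<ge> 0 \<and> (int i = 10*j^2 + j \<or> int i = 10*j^2 - j) then 1
              else if \<exists>j::int. j \<ge> 0 \<and> (int i = 10*j^2 + 9*j + 2 \<or> int i = 10*j^2 - 9*j + 2) then -1
              else 0)"

definition compositions :: "nat set \<Rightarrow> nat list set" where
  "compositions T = {c. \<forall>x\<in>set c. 0 < x \<and> x \<in> T}"

definition P5 :: "nat set" where
  "P5 = {x. \<exists>m::int. m \<ge> 0 \<and> (int x = m*(3*m+1) div 2 \<or> int x = m*(3*m-1) div 2)}"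

definition P5hat :: "nat set" where
  "P5hat = {x. \<exists>m::int. m \<ge> 0 \<and> even m \<and> (int x = m*(3*m+1) div 2 \<or> int x = m*(3*m-1) div 2)}"

definition ellhat :: "nat list \<Rightarrow> nat" where
  "ellhat c = length (filter (\<lambda>x. x \<in> P5hat) c)"

end

theory Submission
  imports Defs "HOL-Computational_Algebra.Formal_Power_Series"
begin
unbundle fps_syntax

definition eqm :: "nat \<Rightarrow> int fps \<Rightarrow> int fps \<Rightarrow> bool" where
  "eqm M f g \<longleftrightarrow> (\<forall>i\<le>M. f $ i = g $ i)"

lemma eqm_refl[simp]: "eqm M f f" by (simp add: eqm_def)
lemma eqm_sym: "eqm M f g \<Longrightarrow> eqm M g f" by (simp add: eqm_def)
lemma eqm_trans: "eqm M f g \<Longrightarrow> eqm M g h \<Longrightarrow> eqm M f h" by (simp add: eqm_def)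

lemma eqm_mult: assumes "eqm M f f'" "eqm M g g'" shows "eqm M (f*g) (f'*g')"
  unfolding eqm_def
proof (intro allI impI)
  fix i assume i: "i \<le> M"
  show "(f*g)$i = (f'*g')$i" unfolding fps_mult_nth
    by (rule sum.cong) (use assms i in \<open>auto simp: eqm_def\<close>)
qed

lemma eqm_add: "eqm M f f' \<Longrightarrow> eqm M g g' \<Longrightarrow> eqm M (f+g) (f'+g')"
  by (simp add: eqm_def)

lemma eqm_prod: "(\<And>x. x \<in> A \<Longrightarrow> eqm M (f x) (g x)) \<Longrightarrow> eqm M (prod f A) (prod g A)"
proof (induction A rule: infinite_finite_induct)
  case (insert x F) then show ?case by (simp add: eqm_mult)
qed auto

lemma eqm_sum: "(\<And>x. x \<in> A \<Longrightarrow> eqm M (f x) (g x)) \<Longrightarrow> eqm M (sum f A) (sum g A)"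
  by (simp add: eqm_def fps_sum_nth)

lemma eqm_Xpow_zero: "M < m \<Longrightarrow> eqm M (fps_X^m * f) 0"
  by (simp add: eqm_def fps_X_power_mult_nth)

lemma eqm_one_minus: "M < m \<Longrightarrow> eqm M (1 - fps_X^m) 1"
  by (simp add: eqm_def)

lemma eqm_mono: "eqm M f g \<Longrightarrow> M' \<le> M \<Longrightarrow> eqm M' f g"
  by (simp add: eqm_def)

lemma eqm_prod_trunc:
  assumes "finite I"
  shows "eqm M (\<Prod>i\<in>I. (1 - fps_X^i :: int fps)) (\<Prod>i\<in>{i\<in>I. i \<le> M}. (1 - fps_X^i))"
proof -
  have "I = {i\<in>I. i \<le> M} \<union> {i\<in>I. \<not> i \<le> M}" by auto
  then have "(\<Prod>i\<in>I. (1 - fps_X^i :: int fps)) = (\<Prod>i\<in>{i\<in>I. i \<le> M}. (1 - fps_X^i)) * (\<Prod>i\<in>{i\<in>I. \<not> i \<le> M}. (1 - fps_X^i))"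
    using assms by (metis (no_types, lifting) finite_Un prod.union_disjoint disjoint_iff mem_Collect_eq)
  moreover have "eqm M (\<Prod>i\<in>{i\<in>I. \<not> i \<le> M}. (1 - fps_X^i :: int fps)) (\<Prod>i\<in>{i\<in>I. \<not> i \<le> M}. 1)"
    by (rule eqm_prod) (auto intro: eqm_one_minus)
  ultimately show ?thesis using eqm_mult[OF eqm_refl] by fastforce
qed



fun tri :: "nat \<Rightarrow> nat" where
  "tri 0 = 0" | "tri (Suc j) = tri j + j"

lemma two_tri: "2 * tri j = j * (j - 1)"
proof (induction j)
  case (Suc j) then show ?case by (cases j) (auto simp: algebra_simps)
qed simp

lemma sum_lessThan_tri: "(\<Sum>i<N. i) = tri N"
  by (induction N) auto

fun qb :: "'a::comm_ring_1 \<Rightarrow> nat \<Rightarrow> nat \<Rightarrow> 'a" where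
  "qb Q 0 j = (if j = 0 then 1 else 0)"
| "qb Q (Suc m) 0 = 1"
| "qb Q (Suc m) (Suc j) = qb Q m j + Q^(Suc j) * qb Q m (Suc j)"

lemma qb_zero: "m < j \<Longrightarrow> qb Q m j = 0"
proof (induction m arbitrary: j)
  case 0 then show ?case by simp
next
  case (Suc m) then show ?case by (cases j) auto
qed

lemma qb_0 [simp]: "qb Q m 0 = 1"
  by (cases m) auto

lemma qbin_thm:
  fixes Q y z :: "'a::comm_ring_1"
  shows "(\<Prod>i<m. y + z * Q^i) = (\<Sum>j\<le>m. Q^(tri j) * qb Q m j * z^j * y^(m-j))"
proof (induction m arbitrary: z)
  case 0 then show ?case by simp
next
  case (Suc m)
  define A where "A j = Q^(tri j) * qb Q m j * (z*Q)^j * y^(m-j)" for j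
  have "(\<Prod>i<Suc m. y + z * Q^i) = (y + z) * (\<Prod>i<m. y + (z*Q) * Q^i)"
    by (subst prod.lessThan_Suc_shift) (simp add: mult.assoc)
  also have "\<dots> = (y+z) * (\<Sum>j\<le>m. A j)" using Suc[of "z*Q"] by (simp add: A_def)
  also have "\<dots> = y * (\<Sum>j\<le>m. A j) + (\<Sum>j\<le>m. z * A j)"
    by (simp add: distrib_right sum_distrib_left sum.distrib)
  also have "(\<Sum>j\<le>m. A j) = (\<Sum>j\<le>Suc m. A j)"
    by (simp add: A_def qb_zero)
  also have "\<dots> = A 0 + (\<Sum>j\<le>m. A (Suc j))" by (rule sum.atMost_Suc_shift)
  finally have L: "(\<Prod>i<Suc m. y + z * Q^i) = y * A 0 + (\<Sum>j\<le>m. y * A (Suc j)) + (\<Sum>j\<le>m. z * A j)"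
    by (simp add: distrib_left sum_distrib_left)
  have R: "(\<Sum>j\<le>Suc m. Q^(tri j) * qb Q (Suc m) j * z^j * y^(Suc m-j))
     = y^(Suc m) + (\<Sum>j\<le>m. Q^(tri j + j) * Q^(Suc j) * qb Q m (Suc j) * z^(Suc j) * y^(m - j))
       + (\<Sum>j\<le>m. Q^(tri j + j) * qb Q m j * z^(Suc j) * y^(m - j))"
  proof -
    have "(\<Sum>j\<le>Suc m. Q^(tri j) * qb Q (Suc m) j * z^j * y^(Suc m-j))
      = y^(Suc m) + (\<Sum>j\<le>m. Q^(tri j + j) * (qb Q m j + Q^(Suc j) * qb Q m (Suc j)) * z^(Suc j) * y^(m - j))"
      by (subst sum.atMost_Suc_shift) simp
    also have "(\<Sum>j\<le>m. Q^(tri j + j) * (qb Q m j + Q^(Suc j) * qb Q m (Suc j)) * z^(Suc j) * y^(m - j))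
      = (\<Sum>j\<le>m. Q^(tri j + j) * Q^(Suc j) * qb Q m (Suc j) * z^(Suc j) * y^(m - j)
           + Q^(tri j + j) * qb Q m j * z^(Suc j) * y^(m - j))"
      by (rule sum.cong) (simp_all add: distrib_left distrib_right mult.assoc mult.left_commute)
    finally show ?thesis by (simp add: sum.distrib add.assoc)
  qed
  have e1: "y * A (Suc j) = Q^(tri j + j) * Q^(Suc j) * qb Q m (Suc j) * z^(Suc j) * y^(m - j)" for j
  proof (cases "j < m")
    case True
    then have "y * y^(m - Suc j) = y^(m-j)" by (metis Suc_diff_Suc power_Suc)
    have "y * A (Suc j) = Q^(tri (Suc j)) * qb Q m (Suc j) * (z*Q)^(Suc j) * (y * y^(m - Suc j))"
      by (simp add: A_def mult_ac)
    also have "\<dots> = Q^(tri (Suc j)) * qb Q m (Suc j) * (z*Q)^(Suc j) * y^(m - j)" using \<open>y * y^(m - Suc j) = y^(m-j)\<close> by simp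
    finally show ?thesis by (simp add: power_mult_distrib power_add mult_ac)
  next
    case False then show ?thesis by (simp add: A_def qb_zero)
  qed
  have e2: "z * A j = Q^(tri j + j) * qb Q m j * z^(Suc j) * y^(m - j)" for j
    unfolding A_def by (simp add: power_mult_distrib power_add algebra_simps)
  show ?case unfolding L R e1 e2 by (simp add: A_def)
qed

lemma qb_poch:
  fixes Q :: "'a::comm_ring_1"
  shows "j \<le> m \<Longrightarrow> qb Q m j * (\<Prod>i\<in>{1..m-j}. 1 - Q^i) = (\<Prod>i\<in>{Suc j..m}. 1 - Q^i)"
proof (induction m arbitrary: j)
  case 0 then show ?case by simp
next
  case (Suc m)
  show ?case
  proof (cases j)
    case 0 then show ?thesis by simp
  next
    case (Suc j')
    with Suc.prems have j': "j' \<le> m" by simp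
    show ?thesis
    proof (cases "j' = m")
      case True then show ?thesis using Suc.IH[of m] Suc by (simp add: qb_zero)
    next
      case False
      then have lt: "j' < m" using j' by simp
      have IH1: "qb Q m j' * (\<Prod>i\<in>{1..m-j'}. 1 - Q^i) = (\<Prod>i\<in>{Suc j'..m}. 1 - Q^i)"
        using Suc.IH[OF j'] .
      have IH2: "qb Q m (Suc j') * (\<Prod>i\<in>{1..m-Suc j'}. 1 - Q^i) = (\<Prod>i\<in>{Suc (Suc j')..m}. 1 - Q^i)"
        using Suc.IH[of "Suc j'"] lt by simp
      have P: "(\<Prod>i\<in>{1..m-j'}. 1 - Q^i) = (\<Prod>i\<in>{1..m-Suc j'}. 1 - Q^i) * (1 - Q^(m-j'))"
      proof -
        have "m - j' = Suc (m - Suc j')" using lt by simp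
        then show ?thesis by simp
      qed
      have P2: "(\<Prod>i\<in>{Suc j'..m}. 1 - Q^i) = (1 - Q^(Suc j')) * (\<Prod>i\<in>{Suc (Suc j')..m}. 1 - Q^i)"
        using lt by (simp add: prod.atLeast_Suc_atMost)
      have "qb Q (Suc m) j * (\<Prod>i\<in>{1..Suc m - j}. 1 - Q^i)
          = qb Q m j' * (\<Prod>i\<in>{1..m-j'}. 1 - Q^i) + Q^(Suc j') * (1 - Q^(m-j')) * (qb Q m (Suc j') * (\<Prod>i\<in>{1..m-Suc j'}. 1 - Q^i))"
      proof -
        have "qb Q (Suc m) j * (\<Prod>i\<in>{1..Suc m - j}. 1 - Q^i) = (qb Q m j' + Q^(Suc j') * qb Q m (Suc j')) * (\<Prod>i\<in>{1..m-j'}. 1 - Q^i)"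
          using Suc by simp
        then show ?thesis unfolding P by (simp add: ring_distribs mult_ac)
      qed
      also have "\<dots> = (\<Prod>i\<in>{Suc (Suc j')..m}. 1 - Q^i) * ((1 - Q^(Suc j')) + Q^(Suc j') * (1 - Q^(m-j')))"
        unfolding IH1 IH2 P2 by (simp add: ring_distribs mult_ac)
      also have "(1 - Q^(Suc j')) + Q^(Suc j') * (1 - Q^(m-j')) = 1 - Q^(Suc m)"
      proof -
        have "Q^(Suc j') * Q^(m-j') = Q^(Suc m)" using lt by (subst power_add[symmetric]) simp
        then show ?thesis by (simp add: algebra_simps)
      qed
      finally show ?thesis using Suc lt by simp
    qed
  qed
qed



lemma prod_lessThan_add: "(\<Prod>i<N+M. f i) = (\<Prod>i<N. f i) * (\<Prod>i<M. f (N+i))"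
  for f :: "nat \<Rightarrow> 'a::comm_monoid_mult"
  by (induction M) (auto simp: mult_ac)

lemma prod_lessThan_reflect: "(\<Prod>i<N. f (N - 1 - i)) = (\<Prod>i<N. f i)"
  for f :: "nat \<Rightarrow> 'a::comm_monoid_mult"
proof (induction N)
  case (Suc N)
  have "(\<Prod>i<Suc N. f (Suc N - 1 - i)) = f N * (\<Prod>i<N. f (N - 1 - i))"
    by (subst prod.lessThan_Suc_shift) simp
  then show ?case using Suc by (simp add: mult_ac)
qed simp

lemma fin_jtp:
  fixes k a b N :: nat assumes ab: "a + b = k"
  shows "(-1)^N * fps_X^(a*N + k*tri N + k*N*N) * ((\<Prod>i<N. 1 - fps_X^(a+k*i)) * (\<Prod>i<N. 1 - fps_X^(b+k*i)))
   = (\<Sum>j\<le>2*N. (-1)^j * fps_X^(k*tri j + a*j + k*N*(2*N-j)) * qb (fps_X^k) (2*N) j :: int fps)"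
proof -
  define X :: "int fps" where "X = fps_X"
  define f where "f i = (X^k)^N + (- (X^a)) * (X^k)^i" for i
  have qthm: "(\<Prod>i<2*N. f i) = (\<Sum>j\<le>2*N. (X^k)^(tri j) * qb (X^k) (2*N) j * (- (X^a))^j * ((X^k)^N)^(2*N-j))"
    unfolding f_def by (rule qbin_thm)
  have rhs: "(X^k)^(tri j) * qb (X^k) (2*N) j * (- (X^a))^j * ((X^k)^N)^(2*N-j)
      = (-1)^j * X^(k*tri j + a*j + k*N*(2*N-j)) * qb (X^k) (2*N) j" for j
  proof -
    have "X^(k*tri j + a*j + k*N*(2*N-j)) = (X^k)^(tri j) * (X^a)^j * ((X^k)^N)^(2*N-j)"
      by (simp only: power_mult[symmetric]) (simp add: power_add)
    moreover have "(- (X^a))^j = (-1)^j * (X^a)^j" by (rule power_minus)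
    ultimately show ?thesis by (simp add: mult_ac)
  qed
  have hi: "f (N+i) = X^(k*N) * (1 - X^(a+k*i))" for i
    unfolding f_def by (simp only: power_mult[symmetric]) (simp add: power_add algebra_simps)
  have lo: "f i = (- (X^(a+k*i))) * (1 - X^(b+k*(N-1-i)))" if "i < N" for i
  proof -
    obtain r where r: "N = Suc (i + r)" using \<open>i<N\<close> less_iff_Suc_add by auto
    have e: "a+k*i + (b+k*(N-1-i)) = k*N" using r ab by (simp add: algebra_simps)
    have "(- (X^(a+k*i))) * (1 - X^(b+k*(N-1-i))) = X^(a+k*i + (b+k*(N-1-i))) - X^(a+k*i)"
      by (simp add: power_add algebra_simps)
    also have "\<dots> = f i" unfolding e f_def by (simp only: power_mult[symmetric]) (simp add: power_add algebra_simps)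
    finally show ?thesis by simp
  qed
  have "(\<Prod>i<2*N. f i) = (\<Prod>i<N. f i) * (\<Prod>i<N. f (N+i))"
    using prod_lessThan_add[of f N N] by (simp add: mult_2)
  also have "(\<Prod>i<N. f (N+i)) = X^(k*N*N) * (\<Prod>i<N. 1 - X^(a+k*i))"
    by (simp add: hi prod.distrib power_mult[symmetric] mult.commute)
  also have "(\<Prod>i<N. f i) = (\<Prod>i<N. - (X^(a+k*i))) * (\<Prod>i<N. 1 - X^(b+k*(N-1-i)))"
    unfolding prod.distrib[symmetric] by (rule prod.cong) (simp_all add: lo)
  also have "(\<Prod>i<N. 1 - X^(b+k*(N-1-i))) = (\<Prod>i<N. 1 - X^(b+k*i))"
    by (rule prod_lessThan_reflect[where f="\<lambda>i. 1 - X^(b+k*i)"])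
  also have "(\<Prod>i<N. - (X^(a+k*i))) = (-1)^N * X^(a*N + k*tri N)"
  proof -
    have "(\<Prod>i<N. - (X^(a+k*i))) = (\<Prod>i<N. (-1) * X^(a+k*i))" by simp
    also have "\<dots> = (-1)^N * (\<Prod>i<N. X^(a+k*i))" by (simp only: prod.distrib prod_constant card_lessThan)
    also have "(\<Prod>i<N. X^(a+k*i)) = X^(\<Sum>i<N. a+k*i)" by (simp add: power_sum)
    also have "(\<Sum>i<N. a+k*i) = a*N + k*tri N"
      by (simp add: sum.distrib sum_distrib_left[symmetric] sum_lessThan_tri)
    finally show ?thesis .
  qed
  finally have lhs: "(\<Prod>i<2*N. f i) = (-1)^N * X^(a*N + k*tri N + k*N*N) * ((\<Prod>i<N. 1 - X^(a+k*i)) * (\<Prod>i<N. 1 - X^(b+k*i)))"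
    by (simp add: power_add mult_ac)
  show ?thesis using qthm rhs lhs unfolding X_def by simp
qed



definition Dx :: "nat \<Rightarrow> nat \<Rightarrow> int \<Rightarrow> int" where
  "Dx k a t = (int k * (t^2 - t) + 2 * int a * t) div 2"

lemma even_tt: "even (t^2 - t :: int)"
proof -
  have "t^2 - t = t * (t - 1)" by (simp add: power2_eq_square algebra_simps)
  then show ?thesis by auto
qed

lemma Dx2: "2 * Dx k a t = int k * (t^2 - t) + 2 * int a * t"
proof -
  have "even (int k * (t^2 - t) + 2 * int a * t)" using even_tt by auto
  then show ?thesis unfolding Dx_def by simp
qed

lemma Dx_ge:
  assumes "a + b = k" "1 \<le> a" "1 \<le> b"
  shows "\<bar>t\<bar> \<le> Dx k a t"
proof -
  have "2 * \<bar>t\<bar> \<le> int k * (t^2 - t) + 2 * int a * t"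
  proof (cases "t \<ge> 0")
    case True
    have "0 \<le> t^2 - t"
    proof (cases "t = 0")
      case False
      then have "1 \<le> t" using True by simp
      then have "t * 1 \<le> t * t" using True by (intro mult_left_mono) auto
      then show ?thesis by (simp add: power2_eq_square)
    qed simp
    then have "0 \<le> int k * (t^2 - t)" by simp
    moreover have "1 * t \<le> int a * t" using True assms by (intro mult_right_mono) auto
    then have "2 * t \<le> 2 * int a * t" by simp
    ultimately show ?thesis using True by simp
  next
    case False
    define s where "s = - t"
    have s: "1 \<le> s" using False s_def by simp
    have ts: "t = - s" using s_def by simp
    have sq: "s \<le> s * s" using s by (metis mult_le_cancel_left1 linorder_not_less order.trans zero_le_one)
    have h1: "int k * (2*s) \<le> int k * (s*s + s)" by (rule mult_left_mono) (use sq in linarith, simp)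
    have kab: "int k = int a + int b" using assms by simp
    have h2: "int k * (2*s) = 2*(int a*s) + 2*(int b*s)" by (simp add: kab algebra_simps)
    have h3: "1 * s \<le> int b * s" using s assms by (intro mult_right_mono) auto
    have h4: "t^2 - t = s*s + s" by (simp add: ts power2_eq_square)
    have h5: "int a * t = - (int a * s)" by (simp add: ts)
    have h6: "\<bar>t\<bar> = s" using ts s by simp
    have "2 * \<bar>t\<bar> \<le> int k * (s*s + s) + 2 * (int a * t)" using h1 h2 h3 h5 h6 by linarith
    then show ?thesis by (simp only: h4 mult.assoc)
  qed
  then show ?thesis using Dx2[of k a t] by simp
qed

lemma Dx_inj:
  assumes "a + b = k" "1 \<le> a" "1 \<le> b" "a \<noteq> b" "Dx k a t = Dx k a t'"
  shows "t = t'"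
proof (rule ccontr)
  assume ne: "t \<noteq> t'"
  have "int k * (t^2 - t) + 2 * int a * t = int k * (t'^2 - t') + 2 * int a * t'"
    using Dx2[of k a t] Dx2[of k a t'] assms(5) by simp
  then have "(t - t') * (int k * (t + t' - 1) + 2 * int a) = 0"
    by (simp add: power2_eq_square algebra_simps)
  then have eq: "int k * (t + t' - 1) = - 2 * int a" using ne by simp
  define m where "m = t + t' - 1"
  have ka: "int a < int k" "int k = int a + int b" using assms by auto
  show False
  proof (cases "m \<ge> 0")
    case True
    then have "0 \<le> int k * m" by simp
    then show ?thesis using eq m_def assms by simp
  next
    case False
    show ?thesis
    proof (cases "m = -1")
      case True then show ?thesis using eq m_def ka assms(4) by simp
    next
      case False2: False
      then have "m \<le> -2" using False by simp
      then have "int k * m \<le> int k * (-2)" by (intro mult_left_mono) auto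
      then show ?thesis using eq m_def ka by simp
    qed
  qed
qed

lemma two_tri_int: "2 * int (tri j) = int j * (int j - 1)"
proof -
  have "2 * tri j = j * (j - 1)" by (rule two_tri)
  then have "int (2 * tri j) = int (j * (j-1))" by simp
  then show ?thesis by (cases j) (auto simp: algebra_simps)
qed

lemma expo_eq:
  assumes "a + b = k" "1 \<le> a" "1 \<le> b" "j \<le> 2*N"
  shows "k*tri j + a*j + k*N*(2*N-j) = (a*N + k*tri N + k*N*N) + nat (Dx k a (int j - int N))"
proof -
  define t where "t = int j - int N"
  have D0: "0 \<le> Dx k a t" using Dx_ge[OF assms(1-3), of t] by simp
  have "2 * int (k*tri j + a*j + k*N*(2*N-j)) = int k * (2 * int (tri j)) + 2 * int a * int j + 2 * int k * int N * (2 * int N - int j)"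
  proof -
    have "int (2*N-j) = 2 * int N - int j" using assms(4) by (simp add: of_nat_diff)
    then have "int (k*N*(2*N-j)) = int k * int N * (2 * int N - int j)" by simp
    then show ?thesis by (simp add: algebra_simps)
  qed
  also have "\<dots> = int k * (int j * (int j - 1)) + 2 * int a * int j + 2 * int k * int N * (2 * int N - int j)"
    by (simp add: two_tri_int)
  also have "\<dots> = int k * (int N * (int N - 1)) + 2 * int a * int N + 2 * int k * int N * int N + (int k * (t^2 - t) + 2 * int a * t)"
    unfolding t_def by (simp add: power2_eq_square algebra_simps)
  also have "\<dots> = 2 * int (a*N + k*tri N + k*N*N) + 2 * Dx k a t"
  proof -
    have "int k * (int N * (int N - 1)) = int k * (2 * int (tri N))" by (simp add: two_tri_int)
    then show ?thesis by (simp add: Dx2 algebra_simps)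
  qed
  also have "\<dots> = 2 * int ((a*N + k*tri N + k*N*N) + nat (Dx k a t))" using D0 by simp
  finally show ?thesis unfolding t_def by (simp only: mult_cancel_left of_nat_eq_iff) simp
qed



definition tcoef :: "nat \<Rightarrow> nat \<Rightarrow> nat \<Rightarrow> int" where
  "tcoef k a n = (if \<exists>t. even t \<and> Dx k a t = int n then 1
                  else if \<exists>t. odd t \<and> Dx k a t = int n then -1 else 0)"

definition poch :: "nat \<Rightarrow> nat \<Rightarrow> int fps" where
  "poch k n = (\<Prod>i\<in>{1..n}. 1 - fps_X^(k*i))"

lemma neg1_pow: "(-1::int fps)^m = fps_const ((-1)^m)"
proof -
  have "(-1::int fps) = fps_const (-1)" using fps_const_neg[of "1::int"] by simp
  then show ?thesis by simp
qed

lemma eqm_prod_sub: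
  assumes "finite J" "I \<subseteq> J" "\<And>i. i \<in> J - I \<Longrightarrow> M < g i"
  shows "eqm M (\<Prod>i\<in>I. (1 - fps_X^(g i) :: int fps)) (\<Prod>i\<in>J. 1 - fps_X^(g i))"
proof -
  have eq: "(\<Prod>i\<in>J. (1 - fps_X^(g i) :: int fps)) = (\<Prod>i\<in>J - I. 1 - fps_X^(g i)) * (\<Prod>i\<in>I. 1 - fps_X^(g i))"
    using prod.subset_diff[OF assms(2,1)] by simp
  have e0: "eqm M (\<Prod>i\<in>J - I. (1 - fps_X^(g i) :: int fps)) (\<Prod>i\<in>J - I. 1)"
    by (rule eqm_prod) (use assms(3) in \<open>auto intro: eqm_one_minus\<close>)
  then have e1: "eqm M (\<Prod>i\<in>J - I. (1 - fps_X^(g i) :: int fps)) 1" by simp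
  have e2: "eqm M ((\<Prod>i\<in>J - I. (1 - fps_X^(g i) :: int fps)) * (\<Prod>i\<in>I. 1 - fps_X^(g i))) (1 * (\<Prod>i\<in>I. 1 - fps_X^(g i)))"
    by (rule eqm_mult[OF e1 eqm_refl])
  have "eqm M (\<Prod>i\<in>J. (1 - fps_X^(g i) :: int fps)) (\<Prod>i\<in>I. 1 - fps_X^(g i))"
    using e2 unfolding eq by simp
  then show ?thesis by (rule eqm_sym)
qed

lemma eqm_shift: "eqm M' f g \<Longrightarrow> M \<le> d + M' \<Longrightarrow> eqm M (fps_X^d * f) (fps_X^d * g)"
  by (auto simp: eqm_def fps_X_power_mult_nth)

lemma lt_k_mult: fixes k :: nat assumes a: "1 \<le> k" "m < i" shows "m < k*i"
proof -
  have "1*i \<le> k*i" using a(1) by (rule mult_le_mono1)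
  then show ?thesis using a(2) by linarith
qed

lemma poch_eqm:
  assumes "1 \<le> k" "m \<le> n" "m \<le> n'"
  shows "eqm m (poch k n) (poch k n')"
proof -
  have h1: "eqm m (\<Prod>i\<in>{1..m}. (1 - fps_X^(k*i) :: int fps)) (\<Prod>i\<in>{1..n}. 1 - fps_X^(k*i))"
    by (rule eqm_prod_sub) (use assms in \<open>auto intro!: lt_k_mult\<close>)
  have h2: "eqm m (\<Prod>i\<in>{1..m}. (1 - fps_X^(k*i) :: int fps)) (\<Prod>i\<in>{1..n'}. 1 - fps_X^(k*i))"
    by (rule eqm_prod_sub) (use assms in \<open>auto intro!: lt_k_mult\<close>)
  show ?thesis unfolding poch_def by (rule eqm_trans[OF eqm_sym[OF h1] h2])
qed

lemma poch_qb:
  assumes "1 \<le> k" "j \<le> 2*N"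
  shows "eqm (min j (2*N-j)) (poch k N * qb (fps_X^k) (2*N) j) 1"
proof -
  have p1: "eqm (min j (2*N-j)) (poch k N) (poch k (2*N-j))"
    by (rule poch_eqm) (use assms in auto)
  have p2: "eqm (min j (2*N-j)) (poch k N * qb (fps_X^k) (2*N) j) (poch k (2*N-j) * qb (fps_X^k) (2*N) j)"
    by (rule eqm_mult[OF p1 eqm_refl])
  have p3: "poch k (2*N-j) * qb (fps_X^k) (2*N) j = (\<Prod>i\<in>{Suc j..2*N}. 1 - fps_X^(k*i))"
  proof -
    have "poch k (2*N-j) * qb (fps_X^k) (2*N) j = qb (fps_X^k) (2*N) j * poch k (2*N-j)" by (rule mult.commute)
    also have "\<dots> = (\<Prod>i\<in>{Suc j..2*N}. 1 - (fps_X^k)^i)" unfolding poch_def power_mult by (rule qb_poch[OF assms(2)])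
    also have "\<dots> = (\<Prod>i\<in>{Suc j..2*N}. 1 - fps_X^(k*i))" by (simp only: power_mult)
    finally show ?thesis .
  qed
  have p4: "eqm (min j (2*N-j)) (\<Prod>i\<in>{}. (1 - fps_X^(k*i) :: int fps)) (\<Prod>i\<in>{Suc j..2*N}. 1 - fps_X^(k*i))"
    by (rule eqm_prod_sub) (use assms in \<open>auto intro!: lt_k_mult\<close>)
  have p5: "eqm (min j (2*N-j)) 1 (\<Prod>i\<in>{Suc j..2*N}. (1 - fps_X^(k*i) :: int fps))" using p4 by simp
  have p6: "eqm (min j (2*N-j)) (poch k N * qb (fps_X^k) (2*N) j) (\<Prod>i\<in>{Suc j..2*N}. (1 - fps_X^(k*i) :: int fps))"
    using p2 unfolding p3 .
  show ?thesis by (rule eqm_trans[OF p6 eqm_sym[OF p5]])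
qed



lemma coef_sum:
  assumes ab: "a + b = k" "1 \<le> a" "1 \<le> b" "a \<noteq> b" and iN: "i \<le> N"
  shows "(\<Sum>j\<le>2*N. (-1::int)^(N+j) * (if i = nat (Dx k a (int j - int N)) then 1 else 0)) = tcoef k a i"
proof (cases "\<exists>t. Dx k a t = int i")
  case True
  then obtain t where t: "Dx k a t = int i" by blast
  have ge: "\<bar>t\<bar> \<le> int i" using Dx_ge[OF ab(1-3), of t] t by simp
  define j0 where "j0 = nat (t + int N)"
  have j0: "j0 \<le> 2*N" "int j0 - int N = t" using ge iN unfolding j0_def by auto
  have iff: "(i = nat (Dx k a (int j - int N))) \<longleftrightarrow> j = j0" if "j \<le> 2*N" for j
  proof
    assume h: "i = nat (Dx k a (int j - int N))"
    have "0 \<le> Dx k a (int j - int N)" using Dx_ge[OF ab(1-3), of "int j - int N"] by simp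
    then have "Dx k a (int j - int N) = Dx k a t" using h t by simp
    then have "int j - int N = t" by (rule Dx_inj[OF ab])
    then show "j = j0" using j0 by simp
  next
    assume "j = j0" then show "i = nat (Dx k a (int j - int N))" using j0 t by simp
  qed
  have "(\<Sum>j\<le>2*N. (-1::int)^(N+j) * (if i = nat (Dx k a (int j - int N)) then 1 else 0))
      = (\<Sum>j\<le>2*N. (if j = j0 then (-1)^(N+j0) else 0 :: int))"
    by (rule sum.cong) (auto simp: iff)
  also have "\<dots> = (-1)^(N+j0)" using j0 by simp
  finally have S: "(\<Sum>j\<le>2*N. (-1::int)^(N+j) * (if i = nat (Dx k a (int j - int N)) then 1 else 0)) = (-1)^(N+j0)" .
  have par: "even (N + j0) \<longleftrightarrow> even t"
  proof -
    have "int (N + j0) = t + 2 * int N" using j0 by simp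
    then have "even (int (N + j0)) \<longleftrightarrow> even (t + 2 * int N)" by simp
    then show ?thesis by simp
  qed
  show ?thesis
  proof (cases "even t")
    case True
    then show ?thesis using S par t unfolding tcoef_def by auto
  next
    case False
    have no: "\<not> (\<exists>t'. even t' \<and> Dx k a t' = int i)"
    proof
      assume "\<exists>t'. even t' \<and> Dx k a t' = int i"
      then obtain t' where "even t'" "Dx k a t' = Dx k a t" using t by auto
      then show False using Dx_inj[OF ab] False by metis
    qed
    have "odd (N + j0)" using par False by simp
    then have "(-1::int)^(N+j0) = -1" by simp
    then show ?thesis using S no False t unfolding tcoef_def by auto
  qed
next
  case False
  have "(\<Sum>j\<le>2*N. (-1::int)^(N+j) * (if i = nat (Dx k a (int j - int N)) then 1 else 0)) = (\<Sum>j\<le>2*N. (0::int))"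
  proof (rule sum.cong)
    fix j
    have "0 \<le> Dx k a (int j - int N)" using Dx_ge[OF ab(1-3), of "int j - int N"] by simp
    then have "i \<noteq> nat (Dx k a (int j - int N))" using False by auto
    then show "(-1)^(N+j) * (if i = nat (Dx k a (int j - int N)) then 1 else 0) = (0::int)" by simp
  qed simp
  also have "\<dots> = tcoef k a i" using False unfolding tcoef_def by auto
  finally show ?thesis .
qed

lemma jtp_trunc:
  assumes ab: "a + b = k" "1 \<le> a" "1 \<le> b" "a \<noteq> b" and MN: "M \<le> N"
  shows "eqm M (poch k N * ((\<Prod>i<N. 1 - fps_X^(a+k*i)) * (\<Prod>i<N. 1 - fps_X^(b+k*i)))) (Abs_fps (tcoef k a))"
proof -
  have k1: "1 \<le> k" using ab by simp
  define L :: "int fps" where "L = (\<Prod>i<N. 1 - fps_X^(a+k*i)) * (\<Prod>i<N. 1 - fps_X^(b+k*i))"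
  define c where "c = a*N + k*tri N + k*N*N"
  define d where "d j = nat (Dx k a (int j - int N))" for j
  define q where "q j = qb (fps_X^k :: int fps) (2*N) j" for j
  have "(-1)^N * fps_X^c * L = (\<Sum>j\<le>2*N. (-1)^j * fps_X^(k*tri j + a*j + k*N*(2*N-j)) * q j)"
    unfolding L_def c_def q_def by (rule fin_jtp[OF ab(1)])
  also have "\<dots> = (\<Sum>j\<le>2*N. (-1)^j * fps_X^(c + d j) * q j)"
    by (rule sum.cong) (simp_all add: expo_eq[OF ab(1-3)] c_def d_def)
  also have "\<dots> = fps_X^c * (\<Sum>j\<le>2*N. (-1)^j * fps_X^(d j) * q j)"
    by (simp add: sum_distrib_left power_add mult_ac)
  finally have "fps_X^c * ((-1)^N * L) = fps_X^c * (\<Sum>j\<le>2*N. (-1)^j * fps_X^(d j) * q j)"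
    by (simp add: mult_ac)
  then have "(-1)^N * L = (\<Sum>j\<le>2*N. (-1)^j * fps_X^(d j) * q j)" by simp
  then have "(-1)^N * ((-1)^N * L) = (-1)^N * (\<Sum>j\<le>2*N. (-1)^j * fps_X^(d j) * q j)" by simp
  then have LL: "L = (\<Sum>j\<le>2*N. (-1)^N * ((-1)^j * fps_X^(d j) * q j))"
    by (simp add: sum_distrib_left power_add[symmetric] flip: mult.assoc)
  have sg: "fps_const ((-1::int)^(N+j)) = (-1)^N * (-1)^j" for j
    by (simp only: neg1_pow fps_const_mult power_add)
  have PL: "poch k N * L = (\<Sum>j\<le>2*N. fps_const ((-1)^(N+j)) * (fps_X^(d j) * (poch k N * q j)))"
    unfolding LL sum_distrib_left sg by (rule sum.cong) (simp_all add: mult_ac)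
  have T: "eqm M (fps_const ((-1)^(N+j)) * (fps_X^(d j) * (poch k N * q j))) (fps_const ((-1)^(N+j)) * (fps_X^(d j) * 1))"
    if j: "j \<le> 2*N" for j
  proof -
    have "eqm (min j (2*N-j)) (poch k N * q j) 1" unfolding q_def by (rule poch_qb[OF k1 j])
    moreover have "M \<le> d j + min j (2*N-j)"
    proof -
      have "\<bar>int j - int N\<bar> \<le> Dx k a (int j - int N)" by (rule Dx_ge[OF ab(1-3)])
      moreover have "0 \<le> Dx k a (int j - int N)" using calculation by linarith
      ultimately have "\<bar>int j - int N\<bar> \<le> int (d j)" unfolding d_def by simp
      moreover have "int N - \<bar>int j - int N\<bar> \<le> int (min j (2*N-j))" using j by auto
      ultimately show ?thesis using MN by linarith
    qed
    ultimately have "eqm M (fps_X^(d j) * (poch k N * q j)) (fps_X^(d j) * 1)" by (rule eqm_shift)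
    then show ?thesis by (rule eqm_mult[OF eqm_refl])
  qed
  have "eqm M (poch k N * L) (\<Sum>j\<le>2*N. fps_const ((-1)^(N+j)) * (fps_X^(d j) * 1))"
    unfolding PL by (rule eqm_sum) (use T in simp)
  moreover have "eqm M (\<Sum>j\<le>2*N. fps_const ((-1)^(N+j)) * (fps_X^(d j) * 1)) (Abs_fps (tcoef k a))"
    unfolding eqm_def
  proof (intro allI impI)
    fix i assume i: "i \<le> M"
    have "(\<Sum>j\<le>2*N. fps_const ((-1)^(N+j)) * (fps_X^(d j) * 1)) $ i
        = (\<Sum>j\<le>2*N. (-1::int)^(N+j) * (if i = nat (Dx k a (int j - int N)) then 1 else 0))"
      by (simp add: fps_sum_nth d_def)
    also have "\<dots> = tcoef k a i" using coef_sum[OF ab, of i N] i MN by simp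
    finally show "(\<Sum>j\<le>2*N. fps_const ((-1)^(N+j)) * (fps_X^(d j) * 1)) $ i = Abs_fps (tcoef k a) $ i" by simp
  qed
  ultimately show ?thesis unfolding L_def by (rule eqm_trans)
qed



lemma mem_le_sum_mset: "x \<in># M \<Longrightarrow> x \<le> sum_mset (M :: nat multiset)"
  by (induction M) auto

lemma size_le_sum_mset: "(\<forall>x\<in>#M. 0 < x) \<Longrightarrow> size M \<le> sum_mset (M :: nat multiset)"
  by (induction M) auto

definition cnt :: "nat set \<Rightarrow> nat \<Rightarrow> nat" where
  "cnt T n = card {M. set_mset M \<subseteq> T \<and> sum_mset M = n}"

lemma finite_parts:
  fixes T :: "nat set" and n :: nat
  assumes "0 \<notin> T"
  shows "finite {M. set_mset M \<subseteq> T \<and> sum_mset M = n}"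
proof -
  have "{M. set_mset M \<subseteq> T \<and> sum_mset M = n} \<subseteq> mset ` {xs. set xs \<subseteq> {0..n} \<and> length xs \<le> n}"
  proof
    fix M assume M: "M \<in> {M. set_mset M \<subseteq> T \<and> sum_mset M = n}"
    then have pos: "\<forall>x\<in>#M. 0 < x" using assms by (metis (mono_tags, lifting) gr0I mem_Collect_eq subsetD)
    have "size M \<le> n" using size_le_sum_mset[OF pos] M by simp
    moreover have "set_mset M \<subseteq> {0..n}" using M mem_le_sum_mset by fastforce
    moreover obtain xs where "M = mset xs" using ex_mset[of M] by metis
    ultimately show "M \<in> mset ` {xs. set xs \<subseteq> {0..n} \<and> length xs \<le> n}" by auto
  qed
  moreover have "finite (mset ` {xs. set xs \<subseteq> {0..n} \<and> length xs \<le> n})"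
    by (intro finite_imageI finite_lists_length_le) simp
  ultimately show ?thesis by (rule finite_subset)
qed

definition Gser :: "nat set \<Rightarrow> int fps" where
  "Gser T = Abs_fps (\<lambda>n. int (cnt T n))"

lemma cnt_empty: "cnt {} n = (if n = 0 then 1 else 0)"
proof -
  have "{M. set_mset M \<subseteq> {} \<and> sum_mset M = n} = (if n = 0 then {{#}} else {})" by auto
  then show ?thesis unfolding cnt_def by simp
qed

lemma cnt_insert:
  assumes "t \<notin> T" "0 < t" "0 \<notin> T"
  shows "int (cnt (insert t T) n) = int (cnt T n) + (if t \<le> n then int (cnt (insert t T) (n - t)) else 0)"
proof -
  define A where "A = {M. set_mset M \<subseteq> insert t T \<and> sum_mset M = n}"
  define B where "B = {M. set_mset M \<subseteq> T \<and> sum_mset M = n}"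
  define C where "C = {M. set_mset M \<subseteq> insert t T \<and> sum_mset M = n \<and> t \<in># M}"
  have z: "0 \<notin> insert t T" using assms by auto
  have AB: "A = B \<union> C" unfolding A_def B_def C_def using assms by auto
  have fB: "finite B" unfolding B_def by (rule finite_parts[OF assms(3)])
  have fC: "finite C"
    by (rule finite_subset[OF _ finite_parts[OF z, of n]]) (auto simp: C_def)
  have dBC: "B \<inter> C = {}" unfolding B_def C_def using assms(1) by auto
  have cA: "card A = card B + card C" unfolding AB using card_Un_disjoint[OF fB fC dBC] .
  have cC: "card C = (if t \<le> n then cnt (insert t T) (n - t) else 0)"
  proof (cases "t \<le> n")
    case True
    have "C = add_mset t ` {M. set_mset M \<subseteq> insert t T \<and> sum_mset M = n - t}"
    proof
      show "C \<subseteq> add_mset t ` {M. set_mset M \<subseteq> insert t T \<and> sum_mset M = n - t}"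
      proof
        fix M assume "M \<in> C"
        then have M: "set_mset M \<subseteq> insert t T" "sum_mset M = n" "t \<in># M" by (auto simp: C_def)
        have "M = add_mset t (M - {#t#})" using M(3) by simp
        moreover have "set_mset (M - {#t#}) \<subseteq> insert t T" using M(1) by (meson in_diffD subset_iff)
        moreover have "sum_mset (M - {#t#}) = n - t"
        proof -
          have "sum_mset (add_mset t (M - {#t#})) = n" using M(2,3) by simp
          then show ?thesis by simp
        qed
        ultimately show "M \<in> add_mset t ` {M. set_mset M \<subseteq> insert t T \<and> sum_mset M = n - t}"
          by (intro image_eqI[where x="M - {#t#}"]) simp_all
      qed
    next
      show "add_mset t ` {M. set_mset M \<subseteq> insert t T \<and> sum_mset M = n - t} \<subseteq> C"
        using True by (auto simp: C_def)
    qed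
    then have "card C = card {M. set_mset M \<subseteq> insert t T \<and> sum_mset M = n - t}"
      by (simp add: card_image inj_on_def)
    then show ?thesis using True unfolding cnt_def by simp
  next
    case False
    have "C = {}"
    proof (rule ccontr)
      assume "C \<noteq> {}"
      then obtain M where "M \<in> C" by blast
      then have "t \<le> sum_mset M" "sum_mset M = n" using mem_le_sum_mset by (auto simp: C_def)
      then show False using False by simp
    qed
    then show ?thesis using False by simp
  qed
  show ?thesis using cA cC unfolding cnt_def A_def[symmetric] B_def[symmetric] by simp
qed

lemma Gser_prod:
  assumes "finite T" "0 \<notin> T"
  shows "Gser T * (\<Prod>t\<in>T. 1 - fps_X^t) = 1"
  using assms
proof (induction T rule: finite_induct)
  case empty
  show ?case by (simp add: Gser_def cnt_empty fps_eq_iff)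
next
  case (insert t T)
  have t0: "0 < t" "0 \<notin> T" using insert.prems by auto
  have "Gser (insert t T) * (1 - fps_X^t) = Gser T"
  proof (rule fps_ext)
    fix n
    have "(Gser (insert t T) * (1 - fps_X^t)) $ n = Gser (insert t T) $ n - (fps_X^t * Gser (insert t T)) $ n"
      by (simp add: algebra_simps)
    also have "\<dots> = Gser T $ n"
      unfolding fps_X_power_mult_nth using cnt_insert[OF insert.hyps(2) t0, of n]
      by (auto simp: Gser_def)
    finally show "(Gser (insert t T) * (1 - fps_X^t)) $ n = Gser T $ n" .
  qed
  then have "Gser (insert t T) * (\<Prod>t\<in>insert t T. 1 - fps_X^t) = Gser T * (\<Prod>t\<in>T. 1 - fps_X^t)"
    using insert.hyps by (simp add: mult.assoc[symmetric])
  then show ?case using insert.IH t0 by simp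
qed



lemma mem_le_sum_list: "x \<in> set c \<Longrightarrow> x \<le> sum_list (c :: nat list)"
  by (induction c) auto

lemma length_le_sum_list: "(\<forall>x\<in>set c. 0 < x) \<Longrightarrow> length c \<le> sum_list (c :: nat list)"
  by (induction c) auto

lemma finite_comps: "finite {c \<in> compositions T. sum_list c = n}"
proof -
  have "{c \<in> compositions T. sum_list c = n} \<subseteq> {xs. set xs \<subseteq> {0..n} \<and> length xs \<le> n}"
  proof
    fix c assume c: "c \<in> {c \<in> compositions T. sum_list c = n}"
    then have "\<forall>x\<in>set c. 0 < x" by (simp add: compositions_def)
    then have "length c \<le> n" using length_le_sum_list c by fastforce
    moreover have "set c \<subseteq> {0..n}" using c mem_le_sum_list by fastforce
    ultimately show "c \<in> {xs. set xs \<subseteq> {0..n} \<and> length xs \<le> n}" by simp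
  qed
  moreover have "finite {xs. set xs \<subseteq> {0..n::nat} \<and> length xs \<le> n}"
    by (intro finite_lists_length_le) simp
  ultimately show ?thesis by (rule finite_subset)
qed

lemma comps_0: "{c \<in> compositions T. sum_list c = 0} = {[]}"
proof -
  have "c = []" if "c \<in> compositions T" "sum_list c = 0" for c
    using that by (cases c) (auto simp: compositions_def)
  then show ?thesis by (auto simp: compositions_def)
qed

lemma comps_pos:
  assumes "0 < n"
  shows "{c \<in> compositions T. sum_list c = n} = (\<Union>p\<in>{p\<in>{1..n}. p \<in> T}. (Cons p) ` {c \<in> compositions T. sum_list c = n - p})"
proof
  show "{c \<in> compositions T. sum_list c = n} \<subseteq> (\<Union>p\<in>{p\<in>{1..n}. p \<in> T}. (Cons p) ` {c \<in> compositions T. sum_list c = n - p})"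
  proof
    fix c assume c: "c \<in> {c \<in> compositions T. sum_list c = n}"
    then obtain p c' where pc: "c = p # c'" using assms by (cases c) auto
    then have "0 < p" "p \<in> T" "c' \<in> compositions T" "p + sum_list c' = n"
      using c by (auto simp: compositions_def)
    then have "p \<in> {p\<in>{1..n}. p \<in> T}" "c \<in> (Cons p) ` {c \<in> compositions T. sum_list c = n - p}"
      using pc by auto
    then show "c \<in> (\<Union>p\<in>{p\<in>{1..n}. p \<in> T}. (Cons p) ` {c \<in> compositions T. sum_list c = n - p})"
      by blast
  qed
next
  show "(\<Union>p\<in>{p\<in>{1..n}. p \<in> T}. (Cons p) ` {c \<in> compositions T. sum_list c = n - p}) \<subseteq> {c \<in> compositions T. sum_list c = n}"
    by (auto simp: compositions_def)
qed

definition sg5 :: "nat \<Rightarrow> int" where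
  "sg5 p = (if p \<in> P5hat then -1 else 1)"

lemma ellhat_Cons: "(-1::int) ^ ellhat (p # c) = sg5 p * (-1) ^ ellhat c"
  by (simp add: ellhat_def sg5_def)

definition wt :: "nat \<Rightarrow> int" where
  "wt n = (\<Sum>c \<in> {c \<in> compositions P5. sum_list c = n}. (-1::int) ^ ellhat c)"

lemma wt_0: "wt 0 = 1"
  by (simp only: wt_def comps_0) (simp add: ellhat_def)

lemma wt_pos:
  assumes "0 < n"
  shows "wt n = (\<Sum>p\<in>{1..n}. (if p \<in> P5 then sg5 p * wt (n - p) else 0))"
proof -
  have "wt n = (\<Sum>p\<in>{p\<in>{1..n}. p \<in> P5}. (\<Sum>c\<in>(Cons p) ` {c \<in> compositions P5. sum_list c = n - p}. (-1::int) ^ ellhat c))"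
    unfolding wt_def comps_pos[OF assms]
    by (rule sum.UNION_disjoint) (auto intro: finite_comps)
  also have "\<dots> = (\<Sum>p\<in>{p\<in>{1..n}. p \<in> P5}. sg5 p * wt (n - p))"
  proof (rule sum.cong)
    fix p
    have "(\<Sum>c\<in>(Cons p) ` {c \<in> compositions P5. sum_list c = n - p}. (-1::int) ^ ellhat c)
        = (\<Sum>c\<in>{c \<in> compositions P5. sum_list c = n - p}. (-1::int) ^ ellhat (p # c))"
      by (subst sum.reindex) (auto simp: inj_on_def)
    also have "\<dots> = sg5 p * wt (n - p)" by (simp add: ellhat_Cons wt_def sum_distrib_left)
    finally show "(\<Sum>c\<in>(Cons p) ` {c \<in> compositions P5. sum_list c = n - p}. (-1::int) ^ ellhat c) = sg5 p * wt (n - p)" .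
  qed simp
  also have "\<dots> = (\<Sum>p\<in>{1..n}. (if p \<in> P5 then sg5 p * wt (n - p) else 0))"
    by (rule sum.inter_filter) simp
  finally show ?thesis .
qed

definition Sser :: "int fps" where
  "Sser = Abs_fps (\<lambda>n. if n \<in> P5 \<and> 0 < n then sg5 n else 0)"

definition Pser :: "int fps" where
  "Pser = Abs_fps wt"

lemma Pser_S: "Pser * (1 - Sser) = 1"
proof (rule fps_ext)
  fix n
  have "(Pser * (1 - Sser)) $ n = wt n - (Sser * Pser) $ n"
    by (simp add: algebra_simps Pser_def)
  also have "(Sser * Pser) $ n = (\<Sum>i=0..n. Sser $ i * wt (n - i))"
    by (simp add: fps_mult_nth Pser_def)
  also have "\<dots> = (\<Sum>i\<in>{1..n}. Sser $ i * wt (n - i))"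
    by (simp add: sum.atLeast_Suc_atMost Sser_def)
  also have "\<dots> = (if n = 0 then 0 else wt n)"
  proof (cases "n = 0")
    case False
    then show ?thesis using wt_pos[of n] by (auto simp: Sser_def intro!: sum.cong)
  qed simp
  finally show "(Pser * (1 - Sser)) $ n = 1 $ n" by (simp add: wt_0)
qed



lemma Dx31: "2 * Dx 3 1 t = t * (3*t - 1)"
  using Dx2[of 3 1 t] by (simp add: power2_eq_square algebra_simps)

lemma P5_iff: "n \<in> P5 \<longleftrightarrow> (\<exists>t. Dx 3 1 t = int n)"
proof
  assume "n \<in> P5"
  then obtain m :: int where m: "m \<ge> 0" "int n = m*(3*m+1) div 2 \<or> int n = m*(3*m-1) div 2"
    unfolding P5_def by blast
  show "\<exists>t. Dx 3 1 t = int n"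
  proof (cases "int n = m*(3*m+1) div 2")
    case True
    have "2 * Dx 3 1 (-m) = m*(3*m+1)" using Dx31[of "-m"] by (simp add: algebra_simps)
    then have "Dx 3 1 (-m) = m*(3*m+1) div 2" by linarith
    then show ?thesis using True by metis
  next
    case False
    then have e: "int n = m*(3*m-1) div 2" using m by blast
    have "Dx 3 1 m = m*(3*m-1) div 2" using Dx31[of m] by linarith
    then show ?thesis using e by metis
  qed
next
  assume "\<exists>t. Dx 3 1 t = int n"
  then obtain t where t: "Dx 3 1 t = int n" by blast
  show "n \<in> P5"
  proof (cases "t \<ge> 0")
    case True
    have "int n = t*(3*t-1) div 2" using Dx31[of t] t by linarith
    then show ?thesis unfolding P5_def using True by blast
  next
    case False
    have "2 * Dx 3 1 t = (-t)*(3*(-t)+1)" using Dx31[of t] by (simp add: algebra_simps)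
    then have "int n = (-t)*(3*(-t)+1) div 2" using t by linarith
    moreover have "-t \<ge> 0" using False by simp
    ultimately show ?thesis unfolding P5_def by blast
  qed
qed

lemma P5hat_iff: "n \<in> P5hat \<longleftrightarrow> (\<exists>t. even t \<and> Dx 3 1 t = int n)"
proof
  assume "n \<in> P5hat"
  then obtain m :: int where m: "m \<ge> 0" "even m" "int n = m*(3*m+1) div 2 \<or> int n = m*(3*m-1) div 2"
    unfolding P5hat_def by blast
  show "\<exists>t. even t \<and> Dx 3 1 t = int n"
  proof (cases "int n = m*(3*m+1) div 2")
    case True
    have "2 * Dx 3 1 (-m) = m*(3*m+1)" using Dx31[of "-m"] by (simp add: algebra_simps)
    then have "Dx 3 1 (-m) = m*(3*m+1) div 2" by linarith
    moreover have "even (-m)" using m by simp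
    ultimately show ?thesis using True by metis
  next
    case False
    then have e: "int n = m*(3*m-1) div 2" using m by blast
    have "Dx 3 1 m = m*(3*m-1) div 2" using Dx31[of m] by linarith
    then show ?thesis using e m by metis
  qed
next
  assume "\<exists>t. even t \<and> Dx 3 1 t = int n"
  then obtain t where t: "even t" "Dx 3 1 t = int n" by blast
  show "n \<in> P5hat"
  proof (cases "t \<ge> 0")
    case True
    have "int n = t*(3*t-1) div 2" using Dx31[of t] t by linarith
    then show ?thesis unfolding P5hat_def using True t by blast
  next
    case False
    have "2 * Dx 3 1 t = (-t)*(3*(-t)+1)" using Dx31[of t] by (simp add: algebra_simps)
    then have "int n = (-t)*(3*(-t)+1) div 2" using t by linarith
    moreover have "-t \<ge> 0" "even (-t)" using False t by simp_all
    ultimately show ?thesis unfolding P5hat_def by blast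
  qed
qed

lemma one_minus_S: "1 - Sser = Abs_fps (tcoef 3 1)"
proof (rule fps_ext)
  fix n
  show "(1 - Sser) $ n = Abs_fps (tcoef 3 1) $ n"
  proof (cases "n = 0")
    case True
    have "Dx 3 1 0 = 0" unfolding Dx_def by simp
    then have "\<exists>t. even t \<and> Dx 3 1 t = int 0" by (intro exI[of _ 0]) simp
    then show ?thesis using True by (simp add: Sser_def tcoef_def)
  next
    case False
    show ?thesis
    proof (cases "n \<in> P5hat")
      case True
      then have "n \<in> P5" using P5hat_iff P5_iff by blast
      then show ?thesis using True False P5hat_iff[of n] by (simp add: Sser_def tcoef_def sg5_def)
    next
      case nh: False
      show ?thesis
      proof (cases "n \<in> P5")
        case True
        then obtain t where t: "Dx 3 1 t = int n" using P5_iff by blast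
        have "odd t" using t nh P5hat_iff by blast
        then have "\<exists>t. odd t \<and> Dx 3 1 t = int n" using t by blast
        then show ?thesis using True nh False P5hat_iff[of n] by (simp add: Sser_def tcoef_def sg5_def)
      next
        case nP: False
        have "\<not> (\<exists>t. Dx 3 1 t = int n)" using nP P5_iff by blast
        then show ?thesis using nP False by (simp add: Sser_def tcoef_def)
      qed
    qed
  qed
qed

lemma Dx53: "2 * Dx 5 3 t = 5*t^2 + t"
  using Dx2[of 5 3 t] by (simp add: power2_eq_square algebra_simps)

lemma acoef_tcoef: "acoef n = tcoef 5 3 n"
proof -
  have A: "(\<exists>j::int. j \<ge> 0 \<and> (int n = 10*j^2 + j \<or> int n = 10*j^2 - j)) \<longleftrightarrow> (\<exists>t. even t \<and> Dx 5 3 t = int n)"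
  proof
    assume "\<exists>j::int. j \<ge> 0 \<and> (int n = 10*j^2 + j \<or> int n = 10*j^2 - j)"
    then obtain j :: int where j: "int n = 10*j^2 + j \<or> int n = 10*j^2 - j" by blast
    have e1: "Dx 5 3 (2*j) = 10*j^2 + j" using Dx53[of "2*j"] by (simp add: power2_eq_square algebra_simps)
    have e2: "Dx 5 3 (-2*j) = 10*j^2 - j" using Dx53[of "-2*j"] by (simp add: power2_eq_square algebra_simps)
    show "\<exists>t. even t \<and> Dx 5 3 t = int n"
      using j e1 e2 by (metis dvd_triv_left even_minus mult_minus_left)
  next
    assume "\<exists>t. even t \<and> Dx 5 3 t = int n"
    then obtain t where t: "even t" "Dx 5 3 t = int n" by blast
    then obtain u where u: "t = 2*u" by blast
    have e: "Dx 5 3 t = 10*u^2 + u" using Dx53[of t] u by (simp add: power2_eq_square algebra_simps)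
    show "\<exists>j::int. j \<ge> 0 \<and> (int n = 10*j^2 + j \<or> int n = 10*j^2 - j)"
    proof (cases "u \<ge> 0")
      case True then show ?thesis using e t by auto
    next
      case False
      have "int n = 10*(-u)^2 - (-u)" using e t by simp
      then show ?thesis using False by (intro exI[of _ "-u"]) simp
    qed
  qed
  have B: "(\<exists>j::int. j \<ge> 0 \<and> (int n = 10*j^2 + 9*j + 2 \<or> int n = 10*j^2 - 9*j + 2)) \<longleftrightarrow> (\<exists>t. odd t \<and> Dx 5 3 t = int n)"
  proof
    assume "\<exists>j::int. j \<ge> 0 \<and> (int n = 10*j^2 + 9*j + 2 \<or> int n = 10*j^2 - 9*j + 2)"
    then obtain j :: int where j: "int n = 10*j^2 + 9*j + 2 \<or> int n = 10*j^2 - 9*j + 2" by blast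
    have e1: "Dx 5 3 (-(2*j+1)) = 10*j^2 + 9*j + 2" using Dx53[of "-(2*j+1)"] by (simp add: power2_eq_square algebra_simps)
    have e2: "Dx 5 3 (2*j-1) = 10*j^2 - 9*j + 2" using Dx53[of "2*j-1"] by (simp add: power2_eq_square algebra_simps)
    have o1: "odd (-(2*j+1))" "odd (2*j-1)" by simp_all
    show "\<exists>t. odd t \<and> Dx 5 3 t = int n"
      using j e1 e2 o1 by metis
  next
    assume "\<exists>t. odd t \<and> Dx 5 3 t = int n"
    then obtain t where t: "odd t" "Dx 5 3 t = int n" by blast
    then obtain u where u: "t = 2*u + 1" by (metis oddE)
    show "\<exists>j::int. j \<ge> 0 \<and> (int n = 10*j^2 + 9*j + 2 \<or> int n = 10*j^2 - 9*j + 2)"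
    proof (cases "u \<ge> 0")
      case True
      have "Dx 5 3 t = 10*(u+1)^2 - 9*(u+1) + 2" using Dx53[of t] u by (simp add: power2_eq_square algebra_simps)
      then show ?thesis using True t by (intro exI[of _ "u+1"]) simp
    next
      case False
      have "Dx 5 3 t = 10*(-u-1)^2 + 9*(-u-1) + 2" using Dx53[of t] u by (simp add: power2_eq_square algebra_simps)
      then show ?thesis using False t by (intro exI[of _ "-u-1"]) simp
    qed
  qed
  show ?thesis unfolding acoef_def tcoef_def using A B by simp
qed



lemma three_fam:
  assumes ab: "a + b = k" "1 \<le> a" "1 \<le> b" "a \<noteq> b" and MN: "M \<le> N"
  shows "eqm M (\<Prod>e\<in>{e\<in>{1..M}. e mod k = 0 \<or> e mod k = a \<or> e mod k = b}. (1 - fps_X^e :: int fps))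
           (poch k N * ((\<Prod>i<N. 1 - fps_X^(a+k*i)) * (\<Prod>i<N. 1 - fps_X^(b+k*i))))"
proof -
  have k1: "1 \<le> k" "a < k" "b < k" using ab by auto
  define J0 where "J0 = (\<lambda>i. k*i) ` {1..N}"
  define Ja where "Ja = (\<lambda>i. a+k*i) ` {..<N}"
  define Jb where "Jb = (\<lambda>i. b+k*i) ` {..<N}"
  have r0: "e mod k = 0" if "e \<in> J0" for e using that unfolding J0_def by auto
  have ra: "e mod k = a" if "e \<in> Ja" for e using that k1 unfolding Ja_def by auto
  have rb: "e mod k = b" if "e \<in> Jb" for e using that k1 unfolding Jb_def by auto
  have p0: "poch k N = (\<Prod>e\<in>J0. 1 - fps_X^e)" unfolding poch_def J0_def
    by (subst prod.reindex) (use k1 in \<open>auto simp: inj_on_def\<close>)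
  have pa: "(\<Prod>i<N. (1 - fps_X^(a+k*i) :: int fps)) = (\<Prod>e\<in>Ja. 1 - fps_X^e)" unfolding Ja_def
    by (subst prod.reindex) (use k1 in \<open>auto simp: inj_on_def\<close>)
  have pb: "(\<Prod>i<N. (1 - fps_X^(b+k*i) :: int fps)) = (\<Prod>e\<in>Jb. 1 - fps_X^e)" unfolding Jb_def
    by (subst prod.reindex) (use k1 in \<open>auto simp: inj_on_def\<close>)
  have fin: "finite J0" "finite Ja" "finite Jb" unfolding J0_def Ja_def Jb_def by auto
  have dab: "Ja \<inter> Jb = {}" using ra rb ab(4) by fastforce
  have d0: "J0 \<inter> (Ja \<union> Jb) = {}" using r0 ra rb ab(2,3) by fastforce
  have pJ: "poch k N * ((\<Prod>i<N. 1 - fps_X^(a+k*i)) * (\<Prod>i<N. 1 - fps_X^(b+k*i))) = (\<Prod>e\<in>J0 \<union> (Ja \<union> Jb). (1 - fps_X^e :: int fps))"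
    unfolding p0 pa pb by (simp add: prod.union_disjoint fin dab d0)
  define I where "I = {e\<in>{1..M}. e mod k = 0 \<or> e mod k = a \<or> e mod k = b}"
  have sub: "I \<subseteq> J0 \<union> (Ja \<union> Jb)"
  proof
    fix e assume e: "e \<in> I"
    then have e1: "1 \<le> e" "e \<le> M" unfolding I_def by auto
    have eq: "e = k * (e div k) + e mod k" by simp
    have "e div k \<le> e" by (rule div_le_dividend)
    consider "e mod k = 0" | "e mod k = a" | "e mod k = b" using e unfolding I_def by auto
    then show "e \<in> J0 \<union> (Ja \<union> Jb)"
    proof cases
      case 1
      then have "e = k * (e div k)" using eq by simp
      moreover have "1 \<le> e div k"
      proof (rule ccontr)
        assume "\<not> 1 \<le> e div k"
        then have "e div k = 0" by simp
        then show False using \<open>e = k * (e div k)\<close> e1 by simp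
      qed
      moreover have "e div k \<le> N" using \<open>e div k \<le> e\<close> e1 MN by linarith
      ultimately show ?thesis unfolding J0_def by auto
    next
      case 2
      then have "e = a + k * (e div k)" using eq by simp
      moreover have "e div k < N"
      proof -
        have "1 * (e div k) \<le> k * (e div k)" by (rule mult_le_mono1) (use k1 in simp)
        then show ?thesis using \<open>e = a + k * (e div k)\<close> e1 MN ab(2) by linarith
      qed
      ultimately show ?thesis unfolding Ja_def by auto
    next
      case 3
      then have "e = b + k * (e div k)" using eq by simp
      moreover have "e div k < N"
      proof -
        have "1 * (e div k) \<le> k * (e div k)" by (rule mult_le_mono1) (use k1 in simp)
        then show ?thesis using \<open>e = b + k * (e div k)\<close> e1 MN ab(3) by linarith
      qed
      ultimately show ?thesis unfolding Jb_def by auto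
    qed
  qed
  have out: "M < e" if "e \<in> J0 \<union> (Ja \<union> Jb) - I" for e
  proof -
    have e: "e \<in> J0 \<union> (Ja \<union> Jb)" "e \<notin> I" using that by auto
    have res: "e mod k = 0 \<or> e mod k = a \<or> e mod k = b" using e(1) r0 ra rb by blast
    have "1 \<le> e" using e(1) k1 ab unfolding J0_def Ja_def Jb_def by auto
    then show ?thesis using e(2) res unfolding I_def by auto
  qed
  have "eqm M (\<Prod>e\<in>I. (1 - fps_X^e :: int fps)) (\<Prod>e\<in>J0 \<union> (Ja \<union> Jb). 1 - fps_X^e)"
    using eqm_prod_sub[of "J0 \<union> (Ja \<union> Jb)" I M "\<lambda>e. e"] fin sub out by simp
  then show ?thesis unfolding pJ I_def .
qed



definition Rser :: "int fps" where "Rser = Abs_fps (\<lambda>n. int (rr n))"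
definition Aser :: "int fps" where "Aser = Abs_fps acoef"

lemma rr_cnt:
  assumes "n \<le> M"
  shows "rr n = cnt {x\<in>{1..M}. x mod 5 = 1 \<or> x mod 5 = 4} n"
proof -
  have "{M'. (\<forall>x\<in>#M'. 0 < x \<and> (x mod 5 = 1 \<or> x mod 5 = 4)) \<and> sum_mset M' = n}
      = {M'. set_mset M' \<subseteq> {x\<in>{1..M}. x mod 5 = 1 \<or> x mod 5 = 4} \<and> sum_mset M' = n}"
  proof (intro Collect_cong iffI)
    fix M' assume h: "(\<forall>x\<in>#M'. 0 < x \<and> (x mod 5 = 1 \<or> x mod 5 = 4)) \<and> sum_mset M' = n"
    have "\<forall>x\<in>#M'. x \<le> M" using h mem_le_sum_mset assms by fastforce
    then show "set_mset M' \<subseteq> {x\<in>{1..M}. x mod 5 = 1 \<or> x mod 5 = 4} \<and> sum_mset M' = n"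
      using h by (auto simp: Suc_le_eq)
  qed auto
  then show ?thesis unfolding rr_def cnt_def by simp
qed

lemma main_eqm: "eqm M Rser (Aser * Pser)"
proof -
  define Fs where "Fs = {x\<in>{1..M}. x mod 5 = 1 \<or> x mod 5 = 4}"
  define Gs where "Gs = {e\<in>{1..M}. e mod 5 = 0 \<or> e mod 5 = 3 \<or> e mod 5 = 2}"
  define EM :: "int fps" where "EM = (\<Prod>e\<in>{1..M}. 1 - fps_X^e)"
  have s3: "{e\<in>{1..M}. e mod 3 = 0 \<or> e mod 3 = 1 \<or> e mod 3 = 2} = {1..M}" by auto
  have a1: "eqm M EM (poch 3 M * ((\<Prod>i<M. 1 - fps_X^(1+3*i)) * (\<Prod>i<M. 1 - fps_X^(2+3*i))))"
    using three_fam[of 1 2 3 M M] unfolding EM_def s3 by simp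
  have a2: "eqm M (poch 3 M * ((\<Prod>i<M. 1 - fps_X^(1+3*i)) * (\<Prod>i<M. 1 - fps_X^(2+3*i)))) (1 - Sser)"
    using jtp_trunc[of 1 2 3 M M] unfolding one_minus_S by simp
  have a: "eqm M EM (1 - Sser)" by (rule eqm_trans[OF a1 a2])
  have PE: "eqm M (Pser * EM) 1" using eqm_mult[OF eqm_refl a, of Pser] Pser_S by simp
  have split: "EM = (\<Prod>e\<in>Fs. 1 - fps_X^e) * (\<Prod>e\<in>Gs. 1 - fps_X^e)"
  proof -
    have "{1..M} = Fs \<union> Gs" unfolding Fs_def Gs_def by auto
    moreover have "Fs \<inter> Gs = {}" unfolding Fs_def Gs_def by auto
    ultimately show ?thesis unfolding EM_def
      by (metis (no_types, lifting) finite_Un finite_atLeastAtMost prod.union_disjoint)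
  qed
  have d1: "eqm M (\<Prod>e\<in>Gs. (1 - fps_X^e :: int fps)) (poch 5 M * ((\<Prod>i<M. 1 - fps_X^(3+5*i)) * (\<Prod>i<M. 1 - fps_X^(2+5*i))))"
    using three_fam[of 3 2 5 M M] unfolding Gs_def by simp
  have d2: "eqm M (poch 5 M * ((\<Prod>i<M. 1 - fps_X^(3+5*i)) * (\<Prod>i<M. 1 - fps_X^(2+5*i)))) Aser"
    using jtp_trunc[of 3 2 5 M M] unfolding Aser_def acoef_tcoef[abs_def] by simp
  have d: "eqm M (\<Prod>e\<in>Gs. (1 - fps_X^e :: int fps)) Aser" by (rule eqm_trans[OF d1 d2])
  have e1: "eqm M Rser (Gser Fs)"
    unfolding eqm_def Rser_def Gser_def Fs_def using rr_cnt by simp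
  have e2: "Gser Fs * (\<Prod>e\<in>Fs. 1 - fps_X^e) = 1"
    by (rule Gser_prod) (auto simp: Fs_def)
  have e: "eqm M (Rser * (\<Prod>e\<in>Fs. 1 - fps_X^e)) 1"
    using eqm_mult[OF e1 eqm_refl[of M "\<Prod>e\<in>Fs. 1 - fps_X^e"]] e2 by simp
  have "eqm M (Rser * (Pser * EM)) (Rser * 1)" by (rule eqm_mult[OF eqm_refl PE])
  then have c1: "eqm M Rser (Rser * (Pser * EM))" by (simp add: eqm_sym)
  have eqn: "Rser * (Pser * EM) = (Rser * (\<Prod>e\<in>Fs. 1 - fps_X^e)) * ((\<Prod>e\<in>Gs. 1 - fps_X^e) * Pser)"
    unfolding split by (simp add: mult_ac)
  have c3: "eqm M ((Rser * (\<Prod>e\<in>Fs. 1 - fps_X^e)) * ((\<Prod>e\<in>Gs. 1 - fps_X^e) * Pser)) (1 * (Aser * Pser))"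
    by (rule eqm_mult[OF e eqm_mult[OF d eqm_refl]])
  have c2: "eqm M (Rser * (Pser * EM)) (Aser * Pser)" using c3 unfolding eqn[symmetric] mult_1_left .
  show ?thesis by (rule eqm_trans[OF c1 c2])
qed

theorem mainTheorem16:
  fixes n :: nat
  shows "int (rr n) = (\<Sum>i = 0..n. acoef i *
           (\<Sum>c \<in> {c \<in> compositions P5. sum_list c = n - i}. (-1::int) ^ ellhat c))"
proof -
  have "Rser $ n = (Aser * Pser) $ n" using main_eqm[of n] unfolding eqm_def by simp
  then show ?thesis by (simp add: Rser_def Aser_def Pser_def fps_mult_nth wt_def)
qed


end
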